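(* Let $n_1,n_2$ be distinct odd primes with $\gcd(n_1-1,n_2-1)=6$, $n=n_1n_2$, and let $D_0,\dots,D_5$ be the Whiteman generalized cyclotomic classes of order 6 modulo $n$ (see context). Let $q$ be a power of a prime $p$ with $\gcd(q,n)=1$, and let $\beta$ be a primitive $n$-th root of unity in an extension of $\mathrm{GF}(q)$. Let $N_1=\{n_1,\dots,(n_2-1)n_1\}$, $N_2=\{n_2,\dots,(n_1-1)n_2\}$, and $S(x)=\sum_{i\in N_1\cup D_0\cup D_1\cup D_2}x^i$, $T(x)=\sum_{i\in N_1\cup D_1\cup D_2\cup D_3}x^i$, $M(x)=\sum_{i\in N_1\cup D_2\cup D_3\cup D_4}x^i$ in $\mathrm{GF}(q)[x]$. Then for $a\in\mathbb{Z}_n$: (1) $S(\beta^a)=T(\beta^a)=M(\beta^a)=-\frac{n_1+1}{2}\bmod p$ if $a\in N_1$, and $=\frac{n_2-1}{2}\bmod p$ if $a\in N_2$; (2) $S(\beta^a)$ equals $S(\beta),\ T(\beta),\ M(\beta),\ -(S(\beta)+1),\ -(T(\beta)+1),\ -(M(\beta)+1)$ according as $a\in D_0,D_1,D_2,D_3,D_4,D_5$ respectively; (3) $T(\beta^a)$ equals $T(\beta),\ M(\beta),\ -(S(\beta)+1),\ -(T(\beta)+1),\ -(M(\beta)+1),\ S(\beta)$ according as $a\in D_0,D_1,D_2,D_3,D_4,D_5$ respectively; (4) $M(\beta^a)$ equals $M(\beta),\ -(S(\beta)+1),\ -(T(\beta)+1),\ -(M(\beta)+1),\ S(\beta),\ T(\beta)$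 according as $a\in D_0,D_1,D_2,D_3,D_4,D_5$ respectively.
   Context: Let $e=(n_1-1)(n_2-1)/6$, $g$ a common primitive root of $n_1$ and $n_2$, $u$ an integer with $u\equiv g\pmod{n_1}$, $u\equiv 1\pmod{n_2}$, and $D_i=\{g^su^i\bmod n: s=0,\dots,e-1\}$ for $i=0,\dots,5$; these partition $\mathbb{Z}_n^*$. An integer "mod $p$" denotes its image in the prime field $\mathrm{GF}(p)$. *)

theory Defs
  imports "HOL-Number_Theory.Number_Theory"
begin

definition wh_e :: "nat \<Rightarrow> nat \<Rightarrow> nat" where
  "wh_e n1 n2 = (n1 - 1) * (n2 - 1) div 6"

definition wh_D :: "nat \<Rightarrow> nat \<Rightarrow> nat \<Rightarrow> nat \<Rightarrow> nat \<Rightarrow> nat set" where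
  "wh_D n1 n2 g u i = {(g ^ s * u ^ i) mod (n1 * n2) | s. s < wh_e n1 n2}"

definition wh_N1 :: "nat \<Rightarrow> nat \<Rightarrow> nat set" where
  "wh_N1 n1 n2 = {n1 * j | j. 1 \<le> j \<and> j \<le> n2 - 1}"

definition wh_N2 :: "nat \<Rightarrow> nat \<Rightarrow> nat set" where
  "wh_N2 n1 n2 = {n2 * j | j. 1 \<le> j \<and> j \<le> n1 - 1}"

definition gen_poly :: "nat set \<Rightarrow> 'a::comm_ring_1 \<Rightarrow> 'a" where
  "gen_poly A x = (\<Sum>i\<in>A. x ^ i)"

definition wh_S :: "nat \<Rightarrow> nat \<Rightarrow> nat \<Rightarrow> nat \<Rightarrow> 'a::comm_ring_1 \<Rightarrow> 'a" where
  "wh_S n1 n2 g u = gen_poly (wh_N1 n1 n2 \<union> wh_D n1 n2 g u 0 \<union> wh_D n1 n2 g u 1 \<union> wh_D n1 n2 g u 2)"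

definition wh_T :: "nat \<Rightarrow> nat \<Rightarrow> nat \<Rightarrow> nat \<Rightarrow> 'a::comm_ring_1 \<Rightarrow> 'a" where
  "wh_T n1 n2 g u = gen_poly (wh_N1 n1 n2 \<union> wh_D n1 n2 g u 1 \<union> wh_D n1 n2 g u 2 \<union> wh_D n1 n2 g u 3)"

definition wh_M :: "nat \<Rightarrow> nat \<Rightarrow> nat \<Rightarrow> nat \<Rightarrow> 'a::comm_ring_1 \<Rightarrow> 'a" where
  "wh_M n1 n2 g u = gen_poly (wh_N1 n1 n2 \<union> wh_D n1 n2 g u 2 \<union> wh_D n1 n2 g u 3 \<union> wh_D n1 n2 g u 4)"

end

theory Submission
  imports Defs
begin


lemma tot_eq: fixes m :: nat assumes "m > 1" shows "totatives m = {x. x < m \<and> coprime x m}"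
proof -
  have "coprime x m \<Longrightarrow> x \<noteq> 0 \<and> x \<noteq> m" for x using assms by (cases "x = 0") auto
  then show ?thesis unfolding totatives_def by force
qed

lemma powmod: fixes x :: "'a::monoid_mult" assumes "x ^ m = 1" shows "x ^ (y mod m) = x ^ y"
proof -
  have "x ^ y = x ^ (m * (y div m) + y mod m)" by simp
  also have "\<dots> = (x ^ m) ^ (y div m) * x ^ (y mod m)" by (simp only: power_add power_mult)
  finally show ?thesis using assms by simp
qed

lemma powcong: fixes x :: "'a::monoid_mult" assumes "x ^ m = 1" "[y = z] (mod m)" shows "x ^ y = x ^ z"
  using powmod[OF assms(1), of y] powmod[OF assms(1), of z] assms(2) by (simp add: cong_def)

lemma geo1: fixes x :: "'a::field" assumes "x ^ m = 1" "x \<noteq> 1" "m > 0"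
  shows "(\<Sum>t\<in>{1..<m}. x ^ t) = -1"
proof -
  have "(\<Sum>t<m. x ^ t) = 0" using geometric_sum[OF assms(2), of m] assms(1) by simp
  moreover have "{..<m} = insert 0 {1..<m}" using assms(3) by auto
  ultimately have "1 + (\<Sum>t\<in>{1..<m}. x ^ t) = 0" by simp
  then show ?thesis by (simp add: add_eq_0_iff)
qed

lemma prim_sum: fixes x :: "'a::field"
  assumes p: "prime p" "residue_primroot p g" and x: "x ^ p = 1" "x \<noteq> 1"
  shows "(\<Sum>s<p - 1. x ^ (g ^ s)) = -1"
proof -
  have cg: "coprime p g" and og: "ord p g = p - 1" using p by (auto simp: residue_primroot_def totient_prime)
  have p2: "p \<ge> 2" using p prime_ge_2_nat by auto
  let ?f = "\<lambda>s. g ^ s mod p"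
  have inj: "inj_on ?f {..<p - 1}"
  proof
    fix s t assume st: "s \<in> {..<p - 1}" "t \<in> {..<p - 1}" "g ^ s mod p = g ^ t mod p"
    then have "[s = t] (mod (p - 1))" using order_divides_expdiff[OF cg] og by (simp add: cong_def)
    then show "s = t" using st cong_less_modulus_unique_nat by auto
  qed
  have sub: "?f ` {..<p - 1} \<subseteq> {1..<p}"
  proof
    fix y assume "y \<in> ?f ` {..<p - 1}"
    then obtain s where y: "y = g ^ s mod p" by auto
    have "coprime (g ^ s) p" using cg by (simp add: coprime_commute)
    then have "\<not> p dvd g ^ s" using p2
      by (metis coprime_absorb_right dvd_refl nat_dvd_1_iff_1 numeral_le_one_iff semiring_norm(69))
    then have "y \<noteq> 0" unfolding y by (simp add: dvd_eq_mod_eq_0)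
    moreover have "y < p" unfolding y using p2 by simp
    ultimately show "y \<in> {1..<p}" by simp
  qed
  have "card (?f ` {..<p - 1}) = card {1..<p}" using card_image[OF inj] by simp
  then have img: "?f ` {..<p - 1} = {1..<p}" using card_subset_eq[OF _ sub] by simp
  have "(\<Sum>s<p - 1. x ^ (g ^ s)) = (\<Sum>s<p - 1. x ^ (?f s))" using powmod[OF x(1)] by simp
  also have "\<dots> = (\<Sum>t\<in>{1..<p}. x ^ t)"
    using sum.reindex[OF inj, of "\<lambda>t. x ^ t"] img by simp
  also have "\<dots> = -1" using geo1[OF x] p2 by simp
  finally show ?thesis .
qed

lemma periodic_shift: fixes f :: "nat \<Rightarrow> 'a::comm_ring_1"
  assumes per: "\<And>s. f (s + P) = f s"
  shows "(\<Sum>s<P. f (s + k)) = (\<Sum>s<P. f s)"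
proof (induction k)
  case 0 then show ?case by simp
next
  case (Suc k)
  let ?h = "\<lambda>s. f (s + k)"
  have "(\<Sum>s<Suc P. ?h s) = ?h 0 + (\<Sum>s<P. ?h (Suc s))" by (rule sum.lessThan_Suc_shift)
  moreover have "(\<Sum>s<Suc P. ?h s) = (\<Sum>s<P. ?h s) + ?h P" by simp
  moreover have "?h P = ?h 0" using per[of k] by (simp add: add.commute)
  ultimately have "(\<Sum>s<P. ?h (Suc s)) = (\<Sum>s<P. ?h s)" by (simp add: add.commute)
  then show ?case using Suc by simp
qed

lemma periodic_sum: fixes f :: "nat \<Rightarrow> 'a::comm_ring_1"
  assumes per: "\<And>s. f (s + P) = f s"
  shows "(\<Sum>s<c * P. f (s + k)) = of_nat c * (\<Sum>s<P. f s)"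
proof (induction c)
  case 0 then show ?case by simp
next
  case (Suc c)
  have perm: "f (s + m * P) = f s" for s m
  proof (induction m)
    case (Suc m)
    have "s + Suc m * P = (s + m * P) + P" by simp
    then show ?case using per[of "s + m * P"] Suc by (simp only:)
  qed simp
  have "(\<Sum>s<Suc c * P. f (s + k)) = (\<Sum>s<c * P + P. f (s + k))" by (simp add: add.commute)
  also have "\<dots> = (\<Sum>s\<in>{0..<c * P}. f (s + k)) + (\<Sum>s\<in>{c * P..<c * P + P}. f (s + k))"
    by (simp add: sum.atLeastLessThan_concat atLeast0LessThan[symmetric])
  also have "(\<Sum>s\<in>{c * P..<c * P + P}. f (s + k)) = (\<Sum>s\<in>{0..<P}. f (s + c * P + k))"
    using sum.shift_bounds_nat_ivl[of "\<lambda>s. f (s + k)" 0 "c * P" P] by (simp add: add.commute)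
  also have "\<dots> = (\<Sum>s<P. f (c * P + s + k))"
    by (simp add: atLeast0LessThan algebra_simps)
  also have "(\<Sum>s\<in>{0..<c * P}. f (s + k)) = (\<Sum>s<c * P. f (s + k))"
    by (simp add: atLeast0LessThan)
  also have "(\<Sum>s<P. f (c * P + s + k)) = (\<Sum>s<P. f (s + k))"
    using perm[of "_ + k" c] by (simp add: algebra_simps)
  finally show ?case using Suc periodic_shift[of f P, OF per] by (simp add: algebra_simps)
qed

locale whl =
  fixes n1 n2 g u :: nat
  assumes p1: "prime n1" and p2: "prime n2" and ne: "n1 \<noteq> n2"
    and gcd6: "gcd (n1 - 1) (n2 - 1) = 6"
    and r1: "residue_primroot n1 g" and r2: "residue_primroot n2 g"
    and u1: "[u = g] (mod n1)" and u2: "[u = 1] (mod n2)"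
begin

abbreviation "n \<equiv> n1 * n2"
abbreviation "e \<equiv> wh_e n1 n2"
abbreviation "D \<equiv> wh_D n1 n2 g u"

lemma six1: "6 dvd (n1 - 1)" and six2: "6 dvd (n2 - 1)"
  using gcd6 by (metis gcd_dvd1, metis gcd_dvd2)

lemma n1ge: "n1 \<ge> 7" and n2ge: "n2 \<ge> 7"
proof -
  have "n1 \<ge> 2" "n2 \<ge> 2" using p1 p2 prime_ge_2_nat by auto
  then have "n1 - 1 \<noteq> 0" "n2 - 1 \<noteq> 0" by auto
  then have "6 \<le> n1 - 1" "6 \<le> n2 - 1" using six1 six2 dvd_imp_le by blast+
  then show "n1 \<ge> 7" "n2 \<ge> 7" by auto
qed

lemma cop_n: "coprime n1 n2"
  using p1 p2 ne by (simp add: primes_coprime)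

lemma ord1: "ord n1 g = n1 - 1" using r1 p1 by (simp add: residue_primroot_def totient_prime)
lemma ord2: "ord n2 g = n2 - 1" using r2 p2 by (simp add: residue_primroot_def totient_prime)
lemma cg1: "coprime n1 g" using r1 by (simp add: residue_primroot_def)
lemma cg2: "coprime n2 g" using r2 by (simp add: residue_primroot_def)

lemma expd1: "[g^s = g^t] (mod n1) \<longleftrightarrow> [s = t] (mod (n1 - 1))"
  using order_divides_expdiff[OF cg1] ord1 by simp
lemma expd2: "[g^s = g^t] (mod n2) \<longleftrightarrow> [s = t] (mod (n2 - 1))"
  using order_divides_expdiff[OF cg2] ord2 by simp

lemma cu1: "coprime n1 u" using u1 cg1
  by (metis cong_imp_coprime cong_sym coprime_commute)
lemma cu2: "coprime n2 u" using u2
  by (metis cong_imp_coprime cong_sym coprime_1_left coprime_commute)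
lemma cun: "coprime n u" using cu1 cu2 by simp
lemma cgn: "coprime n g" using cg1 cg2 by simp

definition c1 where "c1 = (n1 - 1) div 6"
definition c2 where "c2 = (n2 - 1) div 6"

lemma e1: "e = c1 * (n2 - 1)" and e2: "e = (n1 - 1) * c2"
proof -
  obtain a b where "n1 - 1 = 6 * a" "n2 - 1 = 6 * b" using six1 six2 by (metis dvdE)
  then show "e = c1 * (n2 - 1)" "e = (n1 - 1) * c2" unfolding wh_e_def c1_def c2_def by simp_all
qed

lemma epos: "e > 0" using e1 n1ge n2ge unfolding c1_def by auto

lemma cong_n: "[a = b] (mod n1) \<Longrightarrow> [a = b] (mod n2) \<Longrightarrow> [a = b] (mod n)"
  using coprime_cong_mult_nat cop_n by blast

lemma ge1: "[g ^ e = 1] (mod n)"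
proof -
  have "[g ^ e = g ^ 0] (mod n1)" unfolding expd1 using e2
    by (simp add: cong_0_iff cong_sym)
  moreover have "[g ^ e = g ^ 0] (mod n2)" unfolding expd2 using e1
    by (simp add: cong_0_iff cong_sym)
  ultimately show ?thesis using cong_n by simp
qed

lemma u6: "\<exists>r. [u ^ 6 = g ^ r] (mod n)"
proof -
  have "n2 - 1 \<noteq> 0" using n2ge by auto
  from bezout_nat[OF this, of "n1 - 1"] obtain x y where
    xy: "(n2 - 1) * x = (n1 - 1) * y + 6" using gcd6 by (auto simp: gcd.commute)
  have "[u ^ 6 = g ^ ((n2 - 1) * x)] (mod n1)"
  proof -
    have "[u ^ 6 = g ^ 6] (mod n1)" using u1 cong_pow by blast
    moreover have "[g ^ 6 = g ^ ((n2 - 1) * x)] (mod n1)" unfolding expd1 xy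
      by (simp add: cong_def)
    ultimately show ?thesis using cong_trans by blast
  qed
  moreover have "[u ^ 6 = g ^ ((n2 - 1) * x)] (mod n2)"
  proof -
    have "[u ^ 6 = 1 ^ 6] (mod n2)" using u2 cong_pow by blast
    moreover have "[g ^ 0 = g ^ ((n2 - 1) * x)] (mod n2)" unfolding expd2
      by (simp add: cong_def)
    ultimately show ?thesis using cong_trans by fastforce
  qed
  ultimately show ?thesis using cong_n by blast
qed


lemma gred: "[g ^ M = g ^ (M mod e)] (mod n)"
proof -
  have "g ^ M = g ^ (e * (M div e) + M mod e)" by simp
  also have "\<dots> = (g ^ e) ^ (M div e) * g ^ (M mod e)"
    by (simp only: power_add power_mult)
  finally have "g ^ M = (g ^ e) ^ (M div e) * g ^ (M mod e)" .
  moreover have "[(g ^ e) ^ (M div e) * g ^ (M mod e) = 1 ^ (M div e) * g ^ (M mod e)] (mod n)"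
    by (rule cong_mult[OF cong_pow[OF ge1] cong_refl])
  ultimately show ?thesis by simp
qed

lemma Dmem: "g ^ m * u ^ l mod n \<in> D (l mod 6)"
proof -
  obtain r where r: "[u ^ 6 = g ^ r] (mod n)" using u6 by blast
  have "u ^ l = u ^ (6 * (l div 6) + l mod 6)" by simp
  also have "\<dots> = (u ^ 6) ^ (l div 6) * u ^ (l mod 6)"
    by (simp only: power_add power_mult)
  finally have ul: "u ^ l = (u ^ 6) ^ (l div 6) * u ^ (l mod 6)" .
  have "[g ^ m * u ^ l = g ^ m * ((g ^ r) ^ (l div 6) * u ^ (l mod 6))] (mod n)"
    unfolding ul by (rule cong_mult[OF cong_refl cong_mult[OF cong_pow[OF r] cong_refl]])
  also have "g ^ m * ((g ^ r) ^ (l div 6) * u ^ (l mod 6)) = g ^ (m + r * (l div 6)) * u ^ (l mod 6)"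
    by (simp add: power_add power_mult)
  also have "[\<dots> = g ^ ((m + r * (l div 6)) mod e) * u ^ (l mod 6)] (mod n)"
    by (rule cong_mult[OF gred cong_refl])
  finally have "g ^ m * u ^ l mod n = g ^ ((m + r * (l div 6)) mod e) * u ^ (l mod 6) mod n"
    by (simp add: cong_def)
  moreover have "(m + r * (l div 6)) mod e < e" using epos by simp
  ultimately show ?thesis unfolding wh_D_def by blast
qed

lemma elcm: "e = lcm (n1 - 1) (n2 - 1)"
proof -
  have "(n1 - 1) * (n2 - 1) = 6 * lcm (n1 - 1) (n2 - 1)"
    using prod_gcd_lcm_nat[of "n1 - 1" "n2 - 1"] unfolding gcd6 .
  then show ?thesis unfolding wh_e_def by simp
qed

lemma gcong: "[g ^ s = g ^ t] (mod n) \<Longrightarrow> [s = t] (mod e)"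
proof -
  assume gn: "[g ^ s = g ^ t] (mod n)"
  have "[g ^ s = g ^ t] (mod n1)" using gn cong_modulus_mult_nat by blast
  then have "[s = t] (mod (n1 - 1))" using expd1 by blast
  moreover have "[g ^ s = g ^ t] (mod n2)" using gn cong_modulus_mult_nat[of _ _ n2 n1]
    by (simp add: mult.commute)
  then have "[s = t] (mod (n2 - 1))" using expd2 by blast
  ultimately show ?thesis unfolding elcm by (rule cong_cong_lcm_nat)
qed

lemma Dinj: "inj_on (\<lambda>s. g ^ s * u ^ j mod n) {..<e}"
proof
  fix s t assume st: "s \<in> {..<e}" "t \<in> {..<e}" "g ^ s * u ^ j mod n = g ^ t * u ^ j mod n"
  have cj: "coprime (u ^ j) n" using cun by (simp add: coprime_commute)
  have "[u ^ j * g ^ s = u ^ j * g ^ t] (mod n)" using st(3) by (simp add: cong_def mult.commute)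
  then have gn: "[g ^ s = g ^ t] (mod n)" using cong_mult_lcancel_nat cj by blast
  then have "[s = t] (mod e)" by (rule gcong)
  then show "s = t" using st cong_less_modulus_unique_nat by auto
qed


definition "U = {x. x < n \<and> coprime x n}"

lemma npos: "n > 1" using n1ge n2ge by (simp add: one_less_mult)

lemma Deq: "D j = (\<lambda>s. g ^ s * u ^ j mod n) ` {..<e}"
  unfolding wh_D_def by auto

lemma Dsub: "D j \<subseteq> U"
proof
  fix x assume "x \<in> D j"
  then obtain s where x: "x = g ^ s * u ^ j mod n" unfolding Deq by auto
  have "coprime (g ^ s * u ^ j) n" using cgn cun by (simp add: coprime_commute)
  then have "coprime x n" unfolding x
    by (metis cong_imp_coprime cong_mod_right cong_refl cong_sym)
  moreover have "x < n" unfolding x using npos by (intro mod_less_divisor) linarith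
  ultimately show "x \<in> U" unfolding U_def by simp
qed

lemma cardD: "card (D j) = e"
  unfolding Deq using card_image[OF Dinj] by simp

lemma finD: "finite (D j)" unfolding Deq by simp

lemma Ddisj: assumes "i < 6" "j < 6" "x \<in> D i" "x \<in> D j" shows "i = j"
proof -
  obtain s where s: "x = g ^ s * u ^ i mod n" using assms(3) unfolding Deq by auto
  obtain t where t: "x = g ^ t * u ^ j mod n" using assms(4) unfolding Deq by auto
  have xx: "[g ^ s * u ^ i = g ^ t * u ^ j] (mod n)" using s t by (simp add: cong_def)
  have a1: "[g ^ s * u ^ i = g ^ t * u ^ j] (mod n1)" using xx cong_modulus_mult_nat by blast
  have a2: "[g ^ s * u ^ i = g ^ t * u ^ j] (mod n2)" using xx cong_modulus_mult_nat[of _ _ n2 n1]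
    by (simp add: mult.commute)
  have "[g ^ s * u ^ i = g ^ s * g ^ i] (mod n1)" by (rule cong_mult[OF cong_refl cong_pow[OF u1]])
  moreover have "[g ^ t * u ^ j = g ^ t * g ^ j] (mod n1)" by (rule cong_mult[OF cong_refl cong_pow[OF u1]])
  ultimately have "[g ^ (s + i) = g ^ (t + j)] (mod n1)" using a1
    by (metis cong_sym cong_trans power_add)
  then have "[s + i = t + j] (mod (n1 - 1))" using expd1 by blast
  then have b1: "[s + i = t + j] (mod 6)" using six1 cong_dvd_modulus_nat by blast
  have "[g ^ s * u ^ i = g ^ s * 1 ^ i] (mod n2)" by (rule cong_mult[OF cong_refl cong_pow[OF u2]])
  moreover have "[g ^ t * u ^ j = g ^ t * 1 ^ j] (mod n2)" by (rule cong_mult[OF cong_refl cong_pow[OF u2]])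
  ultimately have "[g ^ s = g ^ t] (mod n2)" using a2
    by (metis cong_sym cong_trans power_one mult_1_right)
  then have "[s = t] (mod (n2 - 1))" using expd2 by blast
  then have b2: "[s = t] (mod 6)" using six2 cong_dvd_modulus_nat by blast
  have "[t + i = s + i] (mod 6)" using b2 by (simp add: cong_add_rcancel_nat cong_sym)
  then have "[t + i = t + j] (mod 6)" using b1 cong_trans by blast
  then have "[i = j] (mod 6)" using cong_add_lcancel_nat by blast
  then show ?thesis using assms cong_less_modulus_unique_nat by blast
qed

lemma cardU: "card U = 6 * e"
proof -
  have "U = totatives n" unfolding U_def using tot_eq[OF npos] by simp
  then have "card U = totient n" by (simp add: totient_def)
  also have "\<dots> = (n1 - 1) * (n2 - 1)"
    using totient_mult_coprime[OF cop_n] p1 p2 by (simp add: totient_prime)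
  also have "\<dots> = 6 * e" using e2 six2 c2_def by auto
  finally show ?thesis .
qed

lemma finU: "finite U" unfolding U_def by simp

lemma Ucover: "U = (\<Union>j<6. D j)"
proof -
  have "card (\<Union>j<6. D j) = (\<Sum>j<6. card (D j))"
    by (rule card_UN_disjoint) (auto simp: finD dest: Ddisj)
  also have "\<dots> = 6 * e" by (simp add: cardD)
  finally have "card (\<Union>j<6. D j) = card U" using cardU by simp
  moreover have "(\<Union>j<6. D j) \<subseteq> U" using Dsub by auto
  ultimately show ?thesis using card_subset_eq finU by metis
qed

lemma Dmul: assumes "a \<in> D k"
  shows "inj_on (\<lambda>i. a * i mod n) (D j)" and "(\<lambda>i. a * i mod n) ` D j = D ((j + k) mod 6)"
proof -
  have ca: "coprime a n" using Dsub assms unfolding U_def by auto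
  show inj: "inj_on (\<lambda>i. a * i mod n) (D j)"
  proof
    fix x y assume xy: "x \<in> D j" "y \<in> D j" "a * x mod n = a * y mod n"
    have "[x = y] (mod n)" using xy(3) ca cong_mult_lcancel_nat
      by (metis cong_def coprime_commute)
    moreover have "x < n" "y < n" using xy Dsub unfolding U_def by auto
    ultimately show "x = y" using cong_less_modulus_unique_nat by blast
  qed
  obtain t where t: "a = g ^ t * u ^ k mod n" using assms unfolding Deq by auto
  have sub: "(\<lambda>i. a * i mod n) ` D j \<subseteq> D ((j + k) mod 6)"
  proof
    fix y assume "y \<in> (\<lambda>i. a * i mod n) ` D j"
    then obtain s where y: "y = a * (g ^ s * u ^ j mod n) mod n" unfolding Deq by auto
    have "y = (g ^ t * u ^ k) * (g ^ s * u ^ j) mod n" unfolding y t by (simp add: mod_mult_eq)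
    also have "\<dots> = g ^ (t + s) * u ^ (j + k) mod n" by (simp add: power_add algebra_simps)
    finally show "y \<in> D ((j + k) mod 6)" using Dmem by simp
  qed
  have "card ((\<lambda>i. a * i mod n) ` D j) = card (D ((j + k) mod 6))"
    using card_image[OF inj] cardD by simp
  then show "(\<lambda>i. a * i mod n) ` D j = D ((j + k) mod 6)"
    using card_subset_eq[OF finD sub] by simp
qed


lemma Dsum_gen: fixes x :: "'a::field"
  assumes p: "prime p" "residue_primroot p g" "p dvd n" and x: "x ^ p = 1" "x \<noteq> 1"
    and ec: "e = c * (p - 1)" and sh: "\<And>s. [g ^ s * u ^ k = g ^ (s + k')] (mod p)"
  shows "gen_poly (D k) x = - of_nat c"
proof -
  obtain m where m: "n = p * m" using p(3) by blast
  have xn: "x ^ n = 1" unfolding m power_mult x by simp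
  have cg: "coprime p g" and og: "ord p g = p - 1" using p by (auto simp: residue_primroot_def totient_prime)
  have "gen_poly (D k) x = (\<Sum>s<e. x ^ (g ^ s * u ^ k mod n))"
    unfolding gen_poly_def Deq using sum.reindex[OF Dinj, of "\<lambda>i. x ^ i"] by simp
  also have "\<dots> = (\<Sum>s<e. x ^ (g ^ (s + k')))"
    using powmod[OF xn] powcong[OF x(1) sh] by simp
  also have "\<dots> = (\<Sum>s<c * (p - 1). (\<lambda>s. x ^ (g ^ s)) (s + k'))" using ec by simp
  also have "\<dots> = of_nat c * (\<Sum>s<p - 1. x ^ (g ^ s))"
  proof (rule periodic_sum)
    fix s
    have "[s + (p - 1) = s] (mod (p - 1))" by (simp add: cong_def)
    then have "[g ^ (s + (p - 1)) = g ^ s] (mod p)" using order_divides_expdiff[OF cg] og by simp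
    then show "x ^ (g ^ (s + (p - 1))) = x ^ (g ^ s)" by (rule powcong[OF x(1)])
  qed
  also have "\<dots> = - of_nat c" using prim_sum[OF p(1,2) x] by simp
  finally show ?thesis .
qed

lemma N1sum: "gen_poly (wh_N1 n1 n2) (x::'a::comm_ring_1) = (\<Sum>j\<in>{1..<n2}. (x ^ n1) ^ j)"
proof -
  have "wh_N1 n1 n2 = (\<lambda>j. n1 * j) ` {1..<n2}" unfolding wh_N1_def using n2ge by force
  moreover have "inj_on (\<lambda>j. n1 * j) {1..<n2}" using n1ge by (simp add: inj_on_def)
  ultimately show ?thesis unfolding gen_poly_def by (simp add: sum.reindex power_mult)
qed

lemma N2sum: "gen_poly (wh_N2 n1 n2) (x::'a::comm_ring_1) = (\<Sum>j\<in>{1..<n1}. (x ^ n2) ^ j)"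
proof -
  have "wh_N2 n1 n2 = (\<lambda>j. n2 * j) ` {1..<n1}" unfolding wh_N2_def using n1ge by force
  moreover have "inj_on (\<lambda>j. n2 * j) {1..<n1}" using n2ge by (simp add: inj_on_def)
  ultimately show ?thesis unfolding gen_poly_def by (simp add: sum.reindex power_mult)
qed

lemma N1n2: "x \<in> wh_N1 n1 n2 \<Longrightarrow> n1 dvd x \<and> \<not> n2 dvd x \<and> 0 < x \<and> x < n"
proof -
  assume "x \<in> wh_N1 n1 n2"
  then obtain j where j: "x = n1 * j" "1 \<le> j" "j \<le> n2 - 1" unfolding wh_N1_def by auto
  have "\<not> n2 dvd j" using j n2ge by (auto dest: dvd_imp_le)
  moreover have "coprime n2 n1" using cop_n by (simp add: coprime_commute)
  ultimately have "\<not> n2 dvd x" unfolding j(1) using coprime_dvd_mult_right_iff by blast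
  moreover have "x < n" unfolding j(1) using j n1ge n2ge by simp
  moreover have "0 < x" using j n1ge by simp
  ultimately show ?thesis using j by simp
qed

lemma N2n1: "x \<in> wh_N2 n1 n2 \<Longrightarrow> n2 dvd x \<and> \<not> n1 dvd x \<and> 0 < x \<and> x < n"
proof -
  assume "x \<in> wh_N2 n1 n2"
  then obtain j where j: "x = n2 * j" "1 \<le> j" "j \<le> n1 - 1" unfolding wh_N2_def by auto
  have "\<not> n1 dvd j" using j n1ge by (auto dest: dvd_imp_le)
  moreover have "coprime n1 n2" using cop_n by simp
  ultimately have "\<not> n1 dvd x" unfolding j(1) using coprime_dvd_mult_right_iff by blast
  moreover have "x < n" unfolding j(1) using j n1ge n2ge by simp
  moreover have "0 < x" using j n2ge by simp
  ultimately show ?thesis using j by simp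
qed

lemma Un1: "x \<in> U \<Longrightarrow> \<not> n1 dvd x \<and> \<not> n2 dvd x \<and> 0 < x"
proof -
  assume "x \<in> U"
  then have c: "coprime x n1" "coprime x n2" "x < n" unfolding U_def by auto
  have "\<not> n1 dvd x" using c(1) p1 by (metis coprime_common_divisor dvd_refl not_prime_unit)
  moreover have "\<not> n2 dvd x" using c(2) p2 by (metis coprime_common_divisor dvd_refl not_prime_unit)
  moreover have "x \<noteq> 0" using c(1) p1 by (metis coprime_0_left_iff not_prime_unit)
  ultimately show ?thesis by simp
qed

lemma part: "{..<n} = insert 0 (wh_N1 n1 n2 \<union> wh_N2 n1 n2 \<union> U)"
proof
  show "insert 0 (wh_N1 n1 n2 \<union> wh_N2 n1 n2 \<union> U) \<subseteq> {..<n}"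
    using N1n2 N2n1 npos n1ge n2ge unfolding U_def by auto
  show "{..<n} \<subseteq> insert 0 (wh_N1 n1 n2 \<union> wh_N2 n1 n2 \<union> U)"
  proof
    fix x assume x: "x \<in> {..<n}"
    show "x \<in> insert 0 (wh_N1 n1 n2 \<union> wh_N2 n1 n2 \<union> U)"
    proof (cases "x = 0")
      case False
      show ?thesis
      proof (cases "n1 dvd x")
        case d1: True
        show ?thesis
        proof (cases "n2 dvd x")
          case True
          then have "n dvd x" using d1 cop_n divides_mult by blast
          then show ?thesis using x False by (auto dest: dvd_imp_le)
        next
          case nd2: False
          obtain j where j: "x = n1 * j" using d1 by blast
          have "j \<ge> 1" using False j by (cases j) auto
          moreover have "j < n2" using x j by simp
          then have "j \<le> n2 - 1" by simp
          ultimately have "x \<in> wh_N1 n1 n2" unfolding wh_N1_def using j by blast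
          then show ?thesis by simp
        qed
      next
        case nd1: False
        show ?thesis
        proof (cases "n2 dvd x")
          case True
          obtain j where j: "x = n2 * j" using True by blast
          have "j \<ge> 1" using False j by (cases j) auto
          moreover have "j < n1" using x j by simp
          then have "j \<le> n1 - 1" by simp
          ultimately have "x \<in> wh_N2 n1 n2" unfolding wh_N2_def using j by blast
          then show ?thesis by simp
        next
          case nd2: False
          have "coprime n1 x" using nd1 p1 prime_imp_coprime by blast
          moreover have "coprime n2 x" using nd2 p2 prime_imp_coprime by blast
          ultimately have "x \<in> U" unfolding U_def using x by (simp add: coprime_commute)
          then show ?thesis by simp
        qed
      qed
    qed simp
  qed
qed

lemma n1c: "n1 = 6 * c1 + 1" and n2c: "n2 = 6 * c2 + 1"
  using six1 six2 n1ge n2ge unfolding c1_def c2_def by auto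

lemma gp4: assumes "i < 6" "j < 6" "l < 6" "i \<noteq> j" "i \<noteq> l" "j \<noteq> l"
  shows "gen_poly (wh_N1 n1 n2 \<union> D i \<union> D j \<union> D l) (x::'a::comm_ring_1)
     = gen_poly (wh_N1 n1 n2) x + gen_poly (D i) x + gen_poly (D j) x + gen_poly (D l) x"
proof -
  have fN: "finite (wh_N1 n1 n2)" using N1n2 by (auto intro: finite_subset[of _ "{..<n}"])
  have nd: "wh_N1 n1 n2 \<inter> D m = {}" for m using N1n2 Un1 Dsub by blast
  have dd: "a < 6 \<Longrightarrow> b < 6 \<Longrightarrow> a \<noteq> b \<Longrightarrow> D a \<inter> D b = {}" for a b using Ddisj by blast
  have e1: "(wh_N1 n1 n2 \<union> D i) \<inter> D j = {}" using nd dd assms by blast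
  have e2: "(wh_N1 n1 n2 \<union> D i \<union> D j) \<inter> D l = {}" using nd dd assms by blast
  show ?thesis unfolding gen_poly_def
    using fN finD nd e1 e2 by (simp add: sum.union_disjoint)
qed

end

locale whf = whl +
  fixes \<beta> :: "'a::field"
  assumes b1: "\<beta> ^ (n1 * n2) = 1" and b2: "\<forall>j. 0 < j \<and> j < n1 * n2 \<longrightarrow> \<beta> ^ j \<noteq> 1"
begin

lemma bpow: "\<beta> ^ m = 1 \<longleftrightarrow> n dvd m"
proof
  assume "\<beta> ^ m = 1"
  then have "\<beta> ^ (m mod n) = 1" using powmod[OF b1] by simp
  moreover have "m mod n < n" using npos by (intro mod_less_divisor) linarith
  ultimately have "m mod n = 0" using b2 by (metis neq0_conv)
  then show "n dvd m" by (simp add: dvd_eq_mod_eq_0)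
next
  assume "n dvd m"
  then obtain t where "m = n * t" by blast
  then show "\<beta> ^ m = 1" using b1 by (simp add: power_mult)
qed

lemma N1val_a: assumes "\<not> n2 dvd a" shows "gen_poly (wh_N1 n1 n2) (\<beta> ^ a) = -1"
proof -
  have "((\<beta> ^ a) ^ n1) ^ n2 = 1" using b1 by (metis power_mult mult.commute power_one mult.assoc)
  moreover have "(\<beta> ^ a) ^ n1 \<noteq> 1"
  proof
    assume "(\<beta> ^ a) ^ n1 = 1"
    then have "\<beta> ^ (a * n1) = 1" by (simp add: power_mult)
    then have "n1 * n2 dvd n1 * a" using bpow by (simp add: mult.commute)
    then have "n2 dvd a" using n1ge nat_mult_dvd_cancel_disj by simp
    then show False using assms by simp
  qed
  ultimately show ?thesis unfolding N1sum by (rule geo1) (use n2ge in simp)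
qed

lemma N1val_b: assumes "n2 dvd a" shows "gen_poly (wh_N1 n1 n2) (\<beta> ^ a) = of_nat (n2 - 1)"
proof -
  have "n2 * n1 dvd a * n1" using assms by (simp add: mult_dvd_mono)
  then have "n dvd a * n1" by (simp add: mult.commute)
  then have "\<beta> ^ (a * n1) = 1" using bpow by simp
  then have "(\<beta> ^ a) ^ n1 = 1" by (simp add: power_mult)
  then show ?thesis unfolding N1sum by simp
qed

lemma N2val: "gen_poly (wh_N2 n1 n2) \<beta> = -1"
proof -
  have "(\<beta> ^ n2) ^ n1 = \<beta> ^ (n1 * n2)" by (simp only: power_mult[symmetric] mult.commute)
  then have "(\<beta> ^ n2) ^ n1 = 1" using b1 by simp
  moreover have "\<beta> ^ n2 \<noteq> 1" using bpow n1ge n2ge by (simp add: nat_dvd_not_less)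
  ultimately show ?thesis unfolding N2sum by (rule geo1) (use n1ge in simp)
qed


lemma dtotal: "(\<Sum>j<6. gen_poly (D j) \<beta>) = 1"
proof -
  have bne: "\<beta> \<noteq> 1" using b2 npos by (metis power_one_right zero_less_one)
  have "(\<Sum>i<n. \<beta> ^ i) = 0" using geometric_sum[OF bne, of n] b1 by simp
  also have "(\<Sum>i<n. \<beta> ^ i) = 1 + (gen_poly (wh_N1 n1 n2) \<beta> + gen_poly (wh_N2 n1 n2) \<beta> + gen_poly U \<beta>)"
  proof -
    have f: "finite (wh_N1 n1 n2)" "finite (wh_N2 n1 n2)" "finite U"
      using N1n2 N2n1 finU by (auto intro: finite_subset[of _ "{..<n}"])
    have d1: "wh_N1 n1 n2 \<inter> wh_N2 n1 n2 = {}" using N1n2 N2n1 by blast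
    have d2: "(wh_N1 n1 n2 \<union> wh_N2 n1 n2) \<inter> U = {}" using N1n2 N2n1 Un1 by blast
    have z: "0 \<notin> wh_N1 n1 n2 \<union> wh_N2 n1 n2 \<union> U" using N1n2 N2n1 Un1 by blast
    show ?thesis unfolding part gen_poly_def
      using f d1 d2 z by (simp add: sum.union_disjoint)
  qed
  also have "gen_poly U \<beta> = (\<Sum>j<6. gen_poly (D j) \<beta>)"
    unfolding gen_poly_def Ucover
    by (rule sum.UNION_disjoint) (auto simp: finD dest: Ddisj)
  finally show ?thesis using N1val_a[of 1] N2val n2ge
    by (simp add: algebra_simps) 
qed


lemma DvalN1: assumes "a \<in> wh_N1 n1 n2" shows "gen_poly (D k) (\<beta> ^ a) = - of_nat c1"
proof (rule Dsum_gen[OF p2 r2])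
  have a: "n1 dvd a" "0 < a" "a < n" using N1n2[OF assms] by auto
  show "n2 dvd n" by simp
  have "n dvd a * n2" using a(1) by (simp add: mult_dvd_mono)
  then have "\<beta> ^ (a * n2) = 1" using bpow by blast
  then show "(\<beta> ^ a) ^ n2 = 1" by (simp add: power_mult)
  show "\<beta> ^ a \<noteq> 1" using a b2 by blast
  show "e = c1 * (n2 - 1)" by (rule e1)
  show "[g ^ s * u ^ k = g ^ (s + 0)] (mod n2)" for s
    using cong_mult[OF cong_refl[of "g ^ s"] cong_pow[OF u2, of k]] by simp
qed

lemma DvalN2: assumes "a \<in> wh_N2 n1 n2" shows "gen_poly (D k) (\<beta> ^ a) = - of_nat c2"
proof (rule Dsum_gen[OF p1 r1])
  have a: "n2 dvd a" "0 < a" "a < n" using N2n1[OF assms] by auto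
  show "n1 dvd n" by simp
  have "n2 * n1 dvd a * n1" using a(1) by (simp add: mult_dvd_mono)
  then have "n dvd a * n1" by (simp add: mult.commute)
  then have "\<beta> ^ (a * n1) = 1" using bpow by blast
  then show "(\<beta> ^ a) ^ n1 = 1" by (simp add: power_mult)
  show "\<beta> ^ a \<noteq> 1" using a b2 by blast
  show "e = c2 * (n1 - 1)" using e2 by simp
  show "[g ^ s * u ^ k = g ^ (s + k)] (mod n1)" for s
    using cong_mult[OF cong_refl[of "g ^ s"] cong_pow[OF u1, of k]] by (simp add: power_add)
qed

lemma DvalU: assumes "a \<in> D k" shows "gen_poly (D j) (\<beta> ^ a) = gen_poly (D ((j + k) mod 6)) \<beta>"
proof -
  have "gen_poly (D j) (\<beta> ^ a) = (\<Sum>i\<in>D j. \<beta> ^ (a * i mod n))"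
    unfolding gen_poly_def using powmod[OF b1] by (simp add: power_mult)
  also have "\<dots> = (\<Sum>y\<in>(\<lambda>i. a * i mod n) ` D j. \<beta> ^ y)"
    using sum.reindex[OF Dmul(1)[OF assms, of j], of "\<lambda>y. \<beta> ^ y"] by simp
  also have "\<dots> = gen_poly (D ((j + k) mod 6)) \<beta>"
    unfolding Dmul(2)[OF assms] gen_poly_def ..
  finally show ?thesis .
qed

lemma N1valU: assumes "a \<in> D k" shows "gen_poly (wh_N1 n1 n2) (\<beta> ^ a) = -1"
  using N1val_a Un1 Dsub assms by blast


abbreviation "G j \<equiv> gen_poly (D j) \<beta>"

lemma SD: "wh_S n1 n2 g u x = gen_poly (wh_N1 n1 n2) x + gen_poly (D 0) x + gen_poly (D 1) x + gen_poly (D 2) x"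
  unfolding wh_S_def by (rule gp4) auto
lemma TD: "wh_T n1 n2 g u x = gen_poly (wh_N1 n1 n2) x + gen_poly (D 1) x + gen_poly (D 2) x + gen_poly (D 3) x"
  unfolding wh_T_def by (rule gp4) auto
lemma MD: "wh_M n1 n2 g u x = gen_poly (wh_N1 n1 n2) x + gen_poly (D 2) x + gen_poly (D 3) x + gen_poly (D 4) x"
  unfolding wh_M_def by (rule gp4) auto

lemma N1b: "gen_poly (wh_N1 n1 n2) \<beta> = -1"
  using N1val_a[of 1] n2ge by (simp add: nat_dvd_not_less)

lemma G5: "G 5 = 1 - G 0 - G 1 - G 2 - G 3 - G 4"
proof -
  have "G 0 + G 1 + G 2 + G 3 + G 4 + G 5 = 1" using dtotal by (simp add: eval_nat_numeral)
  then show ?thesis by (simp add: algebra_simps)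
qed

lemma val1: "of_int (- ((int n1 + 1) div 2)) = (-1 - 3 * of_nat c1 :: 'a)"
proof -
  have "int n1 + 1 = 2 * (3 * int c1 + 1)" using n1c by simp
  then have "(int n1 + 1) div 2 = 3 * int c1 + 1" by simp
  then show ?thesis by simp
qed

lemma val2: "of_int ((int n2 - 1) div 2) = (3 * of_nat c2 :: 'a)" and val2': "(of_nat (n2 - 1) :: 'a) = 6 * of_nat c2"
proof -
  have "int n2 - 1 = 2 * (3 * int c2)" using n2c by simp
  then have "(int n2 - 1) div 2 = 3 * int c2" by simp
  then show "of_int ((int n2 - 1) div 2) = (3 * of_nat c2 :: 'a)" by simp
  have "n2 - 1 = 6 * c2" using n2c by simp
  then show "(of_nat (n2 - 1) :: 'a) = 6 * of_nat c2" by simp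
qed

lemma mainl: "\<forall>a < n1 * n2.
     let S = wh_S n1 n2 g u; T = wh_T n1 n2 g u; M = wh_M n1 n2 g u; D = wh_D n1 n2 g u in
     (a \<in> wh_N1 n1 n2 \<longrightarrow>
        S (\<beta> ^ a) = of_int (- ((int n1 + 1) div 2)) \<and>
        T (\<beta> ^ a) = of_int (- ((int n1 + 1) div 2)) \<and>
        M (\<beta> ^ a) = of_int (- ((int n1 + 1) div 2))) \<and>
     (a \<in> wh_N2 n1 n2 \<longrightarrow>
        S (\<beta> ^ a) = of_int ((int n2 - 1) div 2) \<and>
        T (\<beta> ^ a) = of_int ((int n2 - 1) div 2) \<and>
        M (\<beta> ^ a) = of_int ((int n2 - 1) div 2)) \<and>
     (a \<in> D 0 \<longrightarrow> S (\<beta> ^ a) = S \<beta> \<and> T (\<beta> ^ a) = T \<beta> \<and> M (\<beta> ^ a) = M \<beta>) \<and>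
     (a \<in> D 1 \<longrightarrow> S (\<beta> ^ a) = T \<beta> \<and> T (\<beta> ^ a) = M \<beta> \<and> M (\<beta> ^ a) = - (S \<beta> + 1)) \<and>
     (a \<in> D 2 \<longrightarrow> S (\<beta> ^ a) = M \<beta> \<and> T (\<beta> ^ a) = - (S \<beta> + 1) \<and> M (\<beta> ^ a) = - (T \<beta> + 1)) \<and>
     (a \<in> D 3 \<longrightarrow> S (\<beta> ^ a) = - (S \<beta> + 1) \<and> T (\<beta> ^ a) = - (T \<beta> + 1) \<and> M (\<beta> ^ a) = - (M \<beta> + 1)) \<and>
     (a \<in> D 4 \<longrightarrow> S (\<beta> ^ a) = - (T \<beta> + 1) \<and> T (\<beta> ^ a) = - (M \<beta> + 1) \<and> M (\<beta> ^ a) = S \<beta>) \<and>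
     (a \<in> D 5 \<longrightarrow> S (\<beta> ^ a) = - (M \<beta> + 1) \<and> T (\<beta> ^ a) = S \<beta> \<and> M (\<beta> ^ a) = T \<beta>)"
proof (intro allI impI)
  fix a assume "a < n1 * n2"
  have b: "wh_S n1 n2 g u \<beta> = -1 + G 0 + G 1 + G 2"
          "wh_T n1 n2 g u \<beta> = -1 + G 1 + G 2 + G 3"
          "wh_M n1 n2 g u \<beta> = -1 + G 2 + G 3 + G 4"
    by (simp_all add: SD TD MD N1b)
  have cN1: "a \<in> wh_N1 n1 n2 \<longrightarrow>
     wh_S n1 n2 g u (\<beta> ^ a) = of_int (- ((int n1 + 1) div 2)) \<and> wh_T n1 n2 g u (\<beta> ^ a) = of_int (- ((int n1 + 1) div 2)) \<and>
     wh_M n1 n2 g u (\<beta> ^ a) = of_int (- ((int n1 + 1) div 2))"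
  proof
    assume aN: "a \<in> wh_N1 n1 n2"
    have nd: "\<not> n2 dvd a" using N1n2[OF aN] by simp
    show "wh_S n1 n2 g u (\<beta> ^ a) = of_int (- ((int n1 + 1) div 2)) \<and> wh_T n1 n2 g u (\<beta> ^ a) = of_int (- ((int n1 + 1) div 2)) \<and>
     wh_M n1 n2 g u (\<beta> ^ a) = of_int (- ((int n1 + 1) div 2))"
      unfolding val1 SD TD MD DvalN1[OF aN] N1val_a[OF nd] by (simp add: algebra_simps)
  qed
  have cN2: "a \<in> wh_N2 n1 n2 \<longrightarrow>
     wh_S n1 n2 g u (\<beta> ^ a) = of_int ((int n2 - 1) div 2) \<and> wh_T n1 n2 g u (\<beta> ^ a) = of_int ((int n2 - 1) div 2) \<and>
     wh_M n1 n2 g u (\<beta> ^ a) = of_int ((int n2 - 1) div 2)"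
  proof
    assume aN: "a \<in> wh_N2 n1 n2"
    have nd: "n2 dvd a" using N2n1[OF aN] by simp
    show "wh_S n1 n2 g u (\<beta> ^ a) = of_int ((int n2 - 1) div 2) \<and> wh_T n1 n2 g u (\<beta> ^ a) = of_int ((int n2 - 1) div 2) \<and>
     wh_M n1 n2 g u (\<beta> ^ a) = of_int ((int n2 - 1) div 2)"
      unfolding val2 SD TD MD DvalN2[OF aN] N1val_b[OF nd] val2' by (simp add: algebra_simps)
  qed
  have C0: "a \<in> D 0 \<longrightarrow> wh_S n1 n2 g u (\<beta> ^ a) = wh_S n1 n2 g u \<beta> \<and> wh_T n1 n2 g u (\<beta> ^ a) = wh_T n1 n2 g u \<beta> \<and> wh_M n1 n2 g u (\<beta> ^ a) = wh_M n1 n2 g u \<beta>"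
  proof
    assume aD: "a \<in> D 0"
    have v: "gen_poly (D j) (\<beta> ^ a) = G ((j + 0) mod 6)" for j by (rule DvalU[OF aD])
    have m0: "(0 + 0) mod 6 = (0::nat)" by simp
    have m1: "(1 + 0) mod 6 = (1::nat)" by simp
    have m2: "(2 + 0) mod 6 = (2::nat)" by simp
    have m3: "(3 + 0) mod 6 = (3::nat)" by simp
    have m4: "(4 + 0) mod 6 = (4::nat)" by simp
    have sa: "wh_S n1 n2 g u (\<beta> ^ a) = -1 + G 0 + G 1 + G 2" by (simp only: SD v N1valU[OF aD] m0 m1 m2 m3 m4)
    have ta: "wh_T n1 n2 g u (\<beta> ^ a) = -1 + G 1 + G 2 + G 3" by (simp only: TD v N1valU[OF aD] m0 m1 m2 m3 m4)
    have ma: "wh_M n1 n2 g u (\<beta> ^ a) = -1 + G 2 + G 3 + G 4" by (simp only: MD v N1valU[OF aD] m0 m1 m2 m3 m4)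
    show "wh_S n1 n2 g u (\<beta> ^ a) = wh_S n1 n2 g u \<beta> \<and> wh_T n1 n2 g u (\<beta> ^ a) = wh_T n1 n2 g u \<beta> \<and> wh_M n1 n2 g u (\<beta> ^ a) = wh_M n1 n2 g u \<beta>"
      unfolding sa ta ma b G5 by (simp add: algebra_simps)
  qed
  have C1: "a \<in> D 1 \<longrightarrow> wh_S n1 n2 g u (\<beta> ^ a) = wh_T n1 n2 g u \<beta> \<and> wh_T n1 n2 g u (\<beta> ^ a) = wh_M n1 n2 g u \<beta> \<and> wh_M n1 n2 g u (\<beta> ^ a) = - (wh_S n1 n2 g u \<beta> + 1)"
  proof
    assume aD: "a \<in> D 1"
    have v: "gen_poly (D j) (\<beta> ^ a) = G ((j + 1) mod 6)" for j by (rule DvalU[OF aD])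
    have m0: "(0 + 1) mod 6 = (1::nat)" by simp
    have m1: "(1 + 1) mod 6 = (2::nat)" by simp
    have m2: "(2 + 1) mod 6 = (3::nat)" by simp
    have m3: "(3 + 1) mod 6 = (4::nat)" by simp
    have m4: "(4 + 1) mod 6 = (5::nat)" by simp
    have sa: "wh_S n1 n2 g u (\<beta> ^ a) = -1 + G 1 + G 2 + G 3" by (simp only: SD v N1valU[OF aD] m0 m1 m2 m3 m4)
    have ta: "wh_T n1 n2 g u (\<beta> ^ a) = -1 + G 2 + G 3 + G 4" by (simp only: TD v N1valU[OF aD] m0 m1 m2 m3 m4)
    have ma: "wh_M n1 n2 g u (\<beta> ^ a) = -1 + G 3 + G 4 + G 5" by (simp only: MD v N1valU[OF aD] m0 m1 m2 m3 m4)
    show "wh_S n1 n2 g u (\<beta> ^ a) = wh_T n1 n2 g u \<beta> \<and> wh_T n1 n2 g u (\<beta> ^ a) = wh_M n1 n2 g u \<beta> \<and> wh_M n1 n2 g u (\<beta> ^ a) = - (wh_S n1 n2 g u \<beta> + 1)"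
      unfolding sa ta ma b G5 by (simp add: algebra_simps)
  qed
  have C2: "a \<in> D 2 \<longrightarrow> wh_S n1 n2 g u (\<beta> ^ a) = wh_M n1 n2 g u \<beta> \<and> wh_T n1 n2 g u (\<beta> ^ a) = - (wh_S n1 n2 g u \<beta> + 1) \<and> wh_M n1 n2 g u (\<beta> ^ a) = - (wh_T n1 n2 g u \<beta> + 1)"
  proof
    assume aD: "a \<in> D 2"
    have v: "gen_poly (D j) (\<beta> ^ a) = G ((j + 2) mod 6)" for j by (rule DvalU[OF aD])
    have m0: "(0 + 2) mod 6 = (2::nat)" by simp
    have m1: "(1 + 2) mod 6 = (3::nat)" by simp
    have m2: "(2 + 2) mod 6 = (4::nat)" by simp
    have m3: "(3 + 2) mod 6 = (5::nat)" by simp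
    have m4: "(4 + 2) mod 6 = (0::nat)" by simp
    have sa: "wh_S n1 n2 g u (\<beta> ^ a) = -1 + G 2 + G 3 + G 4" by (simp only: SD v N1valU[OF aD] m0 m1 m2 m3 m4)
    have ta: "wh_T n1 n2 g u (\<beta> ^ a) = -1 + G 3 + G 4 + G 5" by (simp only: TD v N1valU[OF aD] m0 m1 m2 m3 m4)
    have ma: "wh_M n1 n2 g u (\<beta> ^ a) = -1 + G 4 + G 5 + G 0" by (simp only: MD v N1valU[OF aD] m0 m1 m2 m3 m4)
    show "wh_S n1 n2 g u (\<beta> ^ a) = wh_M n1 n2 g u \<beta> \<and> wh_T n1 n2 g u (\<beta> ^ a) = - (wh_S n1 n2 g u \<beta> + 1) \<and> wh_M n1 n2 g u (\<beta> ^ a) = - (wh_T n1 n2 g u \<beta> + 1)"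
      unfolding sa ta ma b G5 by (simp add: algebra_simps)
  qed
  have C3: "a \<in> D 3 \<longrightarrow> wh_S n1 n2 g u (\<beta> ^ a) = - (wh_S n1 n2 g u \<beta> + 1) \<and> wh_T n1 n2 g u (\<beta> ^ a) = - (wh_T n1 n2 g u \<beta> + 1) \<and> wh_M n1 n2 g u (\<beta> ^ a) = - (wh_M n1 n2 g u \<beta> + 1)"
  proof
    assume aD: "a \<in> D 3"
    have v: "gen_poly (D j) (\<beta> ^ a) = G ((j + 3) mod 6)" for j by (rule DvalU[OF aD])
    have m0: "(0 + 3) mod 6 = (3::nat)" by simp
    have m1: "(1 + 3) mod 6 = (4::nat)" by simp
    have m2: "(2 + 3) mod 6 = (5::nat)" by simp
    have m3: "(3 + 3) mod 6 = (0::nat)" by simp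
    have m4: "(4 + 3) mod 6 = (1::nat)" by simp
    have sa: "wh_S n1 n2 g u (\<beta> ^ a) = -1 + G 3 + G 4 + G 5" by (simp only: SD v N1valU[OF aD] m0 m1 m2 m3 m4)
    have ta: "wh_T n1 n2 g u (\<beta> ^ a) = -1 + G 4 + G 5 + G 0" by (simp only: TD v N1valU[OF aD] m0 m1 m2 m3 m4)
    have ma: "wh_M n1 n2 g u (\<beta> ^ a) = -1 + G 5 + G 0 + G 1" by (simp only: MD v N1valU[OF aD] m0 m1 m2 m3 m4)
    show "wh_S n1 n2 g u (\<beta> ^ a) = - (wh_S n1 n2 g u \<beta> + 1) \<and> wh_T n1 n2 g u (\<beta> ^ a) = - (wh_T n1 n2 g u \<beta> + 1) \<and> wh_M n1 n2 g u (\<beta> ^ a) = - (wh_M n1 n2 g u \<beta> + 1)"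
      unfolding sa ta ma b G5 by (simp add: algebra_simps)
  qed
  have C4: "a \<in> D 4 \<longrightarrow> wh_S n1 n2 g u (\<beta> ^ a) = - (wh_T n1 n2 g u \<beta> + 1) \<and> wh_T n1 n2 g u (\<beta> ^ a) = - (wh_M n1 n2 g u \<beta> + 1) \<and> wh_M n1 n2 g u (\<beta> ^ a) = wh_S n1 n2 g u \<beta>"
  proof
    assume aD: "a \<in> D 4"
    have v: "gen_poly (D j) (\<beta> ^ a) = G ((j + 4) mod 6)" for j by (rule DvalU[OF aD])
    have m0: "(0 + 4) mod 6 = (4::nat)" by simp
    have m1: "(1 + 4) mod 6 = (5::nat)" by simp
    have m2: "(2 + 4) mod 6 = (0::nat)" by simp
    have m3: "(3 + 4) mod 6 = (1::nat)" by simp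
    have m4: "(4 + 4) mod 6 = (2::nat)" by simp
    have sa: "wh_S n1 n2 g u (\<beta> ^ a) = -1 + G 4 + G 5 + G 0" by (simp only: SD v N1valU[OF aD] m0 m1 m2 m3 m4)
    have ta: "wh_T n1 n2 g u (\<beta> ^ a) = -1 + G 5 + G 0 + G 1" by (simp only: TD v N1valU[OF aD] m0 m1 m2 m3 m4)
    have ma: "wh_M n1 n2 g u (\<beta> ^ a) = -1 + G 0 + G 1 + G 2" by (simp only: MD v N1valU[OF aD] m0 m1 m2 m3 m4)
    show "wh_S n1 n2 g u (\<beta> ^ a) = - (wh_T n1 n2 g u \<beta> + 1) \<and> wh_T n1 n2 g u (\<beta> ^ a) = - (wh_M n1 n2 g u \<beta> + 1) \<and> wh_M n1 n2 g u (\<beta> ^ a) = wh_S n1 n2 g u \<beta>"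
      unfolding sa ta ma b G5 by (simp add: algebra_simps)
  qed
  have C5: "a \<in> D 5 \<longrightarrow> wh_S n1 n2 g u (\<beta> ^ a) = - (wh_M n1 n2 g u \<beta> + 1) \<and> wh_T n1 n2 g u (\<beta> ^ a) = wh_S n1 n2 g u \<beta> \<and> wh_M n1 n2 g u (\<beta> ^ a) = wh_T n1 n2 g u \<beta>"
  proof
    assume aD: "a \<in> D 5"
    have v: "gen_poly (D j) (\<beta> ^ a) = G ((j + 5) mod 6)" for j by (rule DvalU[OF aD])
    have m0: "(0 + 5) mod 6 = (5::nat)" by simp
    have m1: "(1 + 5) mod 6 = (0::nat)" by simp
    have m2: "(2 + 5) mod 6 = (1::nat)" by simp
    have m3: "(3 + 5) mod 6 = (2::nat)" by simp
    have m4: "(4 + 5) mod 6 = (3::nat)" by simp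
    have sa: "wh_S n1 n2 g u (\<beta> ^ a) = -1 + G 5 + G 0 + G 1" by (simp only: SD v N1valU[OF aD] m0 m1 m2 m3 m4)
    have ta: "wh_T n1 n2 g u (\<beta> ^ a) = -1 + G 0 + G 1 + G 2" by (simp only: TD v N1valU[OF aD] m0 m1 m2 m3 m4)
    have ma: "wh_M n1 n2 g u (\<beta> ^ a) = -1 + G 1 + G 2 + G 3" by (simp only: MD v N1valU[OF aD] m0 m1 m2 m3 m4)
    show "wh_S n1 n2 g u (\<beta> ^ a) = - (wh_M n1 n2 g u \<beta> + 1) \<and> wh_T n1 n2 g u (\<beta> ^ a) = wh_S n1 n2 g u \<beta> \<and> wh_M n1 n2 g u (\<beta> ^ a) = wh_T n1 n2 g u \<beta>"
      unfolding sa ta ma b G5 by (simp add: algebra_simps)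
  qed
  show "let S = wh_S n1 n2 g u; T = wh_T n1 n2 g u; M = wh_M n1 n2 g u; D = wh_D n1 n2 g u in
     (a \<in> wh_N1 n1 n2 \<longrightarrow>
        S (\<beta> ^ a) = of_int (- ((int n1 + 1) div 2)) \<and>
        T (\<beta> ^ a) = of_int (- ((int n1 + 1) div 2)) \<and>
        M (\<beta> ^ a) = of_int (- ((int n1 + 1) div 2))) \<and>
     (a \<in> wh_N2 n1 n2 \<longrightarrow>
        S (\<beta> ^ a) = of_int ((int n2 - 1) div 2) \<and>
        T (\<beta> ^ a) = of_int ((int n2 - 1) div 2) \<and>
        M (\<beta> ^ a) = of_int ((int n2 - 1) div 2)) \<and>
     (a \<in> D 0 \<longrightarrow> S (\<beta> ^ a) = S \<beta> \<and> T (\<beta> ^ a) = T \<beta> \<and> M (\<beta> ^ a) = M \<beta>) \<and>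
     (a \<in> D 1 \<longrightarrow> S (\<beta> ^ a) = T \<beta> \<and> T (\<beta> ^ a) = M \<beta> \<and> M (\<beta> ^ a) = - (S \<beta> + 1)) \<and>
     (a \<in> D 2 \<longrightarrow> S (\<beta> ^ a) = M \<beta> \<and> T (\<beta> ^ a) = - (S \<beta> + 1) \<and> M (\<beta> ^ a) = - (T \<beta> + 1)) \<and>
     (a \<in> D 3 \<longrightarrow> S (\<beta> ^ a) = - (S \<beta> + 1) \<and> T (\<beta> ^ a) = - (T \<beta> + 1) \<and> M (\<beta> ^ a) = - (M \<beta> + 1)) \<and>
     (a \<in> D 4 \<longrightarrow> S (\<beta> ^ a) = - (T \<beta> + 1) \<and> T (\<beta> ^ a) = - (M \<beta> + 1) \<and> M (\<beta> ^ a) = S \<beta>) \<and>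
     (a \<in> D 5 \<longrightarrow> S (\<beta> ^ a) = - (M \<beta> + 1) \<and> T (\<beta> ^ a) = S \<beta> \<and> M (\<beta> ^ a) = T \<beta>)"
    unfolding Let_def using cN1 cN2 C0 C1 C2 C3 C4 C5 by (intro conjI) assumption+
qed

end

theorem lemma4:
  fixes n1 n2 g u p q k :: nat and \<beta> :: "'a::field"
  assumes "prime n1" and "prime n2" and "odd n1" and "odd n2" and "n1 \<noteq> n2"
    and "gcd (n1 - 1) (n2 - 1) = 6"
    and "residue_primroot n1 g" and "residue_primroot n2 g"
    and "[u = g] (mod n1)" and "[u = 1] (mod n2)"
    and "prime p" and "k \<ge> 1" and "q = p ^ k" and "coprime q (n1 * n2)"
    and "CHAR('a) = p"
    and "card {x::'a. x ^ q = x} = q"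
    and "\<beta> ^ (n1 * n2) = 1" and "\<forall>j. 0 < j \<and> j < n1 * n2 \<longrightarrow> \<beta> ^ j \<noteq> 1"
  shows
   "\<forall>a < n1 * n2.
     let S = wh_S n1 n2 g u; T = wh_T n1 n2 g u; M = wh_M n1 n2 g u; D = wh_D n1 n2 g u in
     (a \<in> wh_N1 n1 n2 \<longrightarrow>
        S (\<beta> ^ a) = of_int (- ((int n1 + 1) div 2)) \<and>
        T (\<beta> ^ a) = of_int (- ((int n1 + 1) div 2)) \<and>
        M (\<beta> ^ a) = of_int (- ((int n1 + 1) div 2))) \<and>
     (a \<in> wh_N2 n1 n2 \<longrightarrow>
        S (\<beta> ^ a) = of_int ((int n2 - 1) div 2) \<and>
        T (\<beta> ^ a) = of_int ((int n2 - 1) div 2) \<and>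
        M (\<beta> ^ a) = of_int ((int n2 - 1) div 2)) \<and>
     (a \<in> D 0 \<longrightarrow> S (\<beta> ^ a) = S \<beta> \<and> T (\<beta> ^ a) = T \<beta> \<and> M (\<beta> ^ a) = M \<beta>) \<and>
     (a \<in> D 1 \<longrightarrow> S (\<beta> ^ a) = T \<beta> \<and> T (\<beta> ^ a) = M \<beta> \<and> M (\<beta> ^ a) = - (S \<beta> + 1)) \<and>
     (a \<in> D 2 \<longrightarrow> S (\<beta> ^ a) = M \<beta> \<and> T (\<beta> ^ a) = - (S \<beta> + 1) \<and> M (\<beta> ^ a) = - (T \<beta> + 1)) \<and>
     (a \<in> D 3 \<longrightarrow> S (\<beta> ^ a) = - (S \<beta> + 1) \<and> T (\<beta> ^ a) = - (T \<beta> + 1) \<and> M (\<beta> ^ a) = - (M \<beta> + 1)) \<and>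
     (a \<in> D 4 \<longrightarrow> S (\<beta> ^ a) = - (T \<beta> + 1) \<and> T (\<beta> ^ a) = - (M \<beta> + 1) \<and> M (\<beta> ^ a) = S \<beta>) \<and>
     (a \<in> D 5 \<longrightarrow> S (\<beta> ^ a) = - (M \<beta> + 1) \<and> T (\<beta> ^ a) = S \<beta> \<and> M (\<beta> ^ a) = T \<beta>)"
proof -
  have "whf n1 n2 g u \<beta>" unfolding whf_def whl_def whf_axioms_def using assms by auto
  then interpret whf n1 n2 g u \<beta> .
  show ?thesis by (rule mainl)
qed

end
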